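(* Let $\beta,\kappa\ge0$. Let $\hat\sigma\sim\mu_{N,\beta,\kappa}$ and $\hat\sigma'\sim\mu_{N,\infty,\kappa}$ be independent, let $E=E_{\hat\sigma,\hat\sigma'}$, and set $\sigma=\hat\sigma$ and $\sigma'=\hat\sigma'|_E+\hat\sigma|_{E_N\setminus E}$. Then $\sigma'$ has law $\mu_{N,\infty,\kappa}$; thus the law $\mu_{N,(\beta,\kappa),(\infty,\kappa)}$ of $(\sigma,\sigma')$ is a coupling of $\mu_{N,\beta,\kappa}$ and $\mu_{N,\infty,\kappa}$.
   Context: $G=\mathbb Z_n$, $\rho$ faithful unitary one-dimensional. On $\mathbb Z^4$: $E_N,P_N$ oriented edges/plaquettes with vertices in $B_N=[-N,N]^4\cap\mathbb Z^4$; $\partial p$ oriented boundary edges; $\hat\partial e=\{p:e\in\partial p\}$. $\Sigma_{E_N}$: $\sigma:E_N\to G$, $\sigma_{-e}=-\sigma_e$, $(d\sigma)_p=\sum_{e\in\partial p}\sigma_e$; $\Sigma^0_{E_N}=\{d\sigma=0\}$. $\mu_{N,\beta,\kappa}(\sigma)\propto\exp(\beta\sum_{p\in P_N}\rho((d\sigma)_p)+\kappa\sum_{e\in E_N}\rho(\sigma_e))$ on $\Sigma_{E_N}$; $\mu_{N,\infty,\kappa}(\sigma)\propto\exp(\kappa\sum_{e\in E_N}\rho(\sigma_e))$ on $\Sigma^0_{E_N}$. $f|_S$ equals $f$ on $S$ and $0$ elsewhere. $\mathcal G(\sigma,\sigma')$ is the graph on $E_N$ with an edge between distinct $e,e'$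 if $e'=-e$, or $e,e'\in\mathrm{supp}\,\sigma\cup\mathrm{supp}\,\sigma'$ and ($\hat\partial e\cap\hat\partial e'\ne\emptyset$ or $\hat\partial e\cap\hat\partial(-e')\ne\emptyset$); $\mathcal C_{\mathcal G}(A)$ is the union of components meeting $A$; $E_{\sigma,\sigma'}=\mathcal C_{\mathcal G(\sigma,\sigma')}(\mathrm{supp}\,\sigma\cap\bigcup_{p\in\mathrm{supp}\,d\sigma}\partial p)$. *)

theory Defs
  imports Complex_Main
begin

(* Lattice Z^4: a vertex is a function nat => int vanishing at coordinates >= 4. *)
type_synonym vtx = "nat \<Rightarrow> int"
(* an oriented edge is an ordered pair (tail, head) of nearest-neighbour vertices *)
type_synonym edge = "vtx \<times> vtx"
(* an oriented plaquette (x, j, k), j \<noteq> k: the unit square with lowest corner x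
   spanned by directions j,k, traversed x -> x+e_j -> x+e_j+e_k -> x+e_k -> x.
   (x,k,j) is the same square with the opposite orientation. *)
type_synonym plaq = "vtx \<times> nat \<times> nat"

definition lat :: "vtx set" where
  "lat = {x. \<forall>i\<ge>4. x i = 0}"

definition step :: "vtx \<Rightarrow> nat \<Rightarrow> vtx" where
  "step x j = x(j := x j + 1)"

definition box :: "nat \<Rightarrow> vtx set" where
  "box N = {x \<in> lat. \<forall>i<4. \<bar>x i\<bar> \<le> int N}"

definition edges :: "nat \<Rightarrow> edge set" where
  "edges N = {(a, b). a \<in> box N \<and> b \<in> box N \<and>
                 (\<exists>j<4. b = step a j \<or> a = step b j)}"

definition rev_edge :: "edge \<Rightarrow> edge" where
  "rev_edge e = (snd e, fst e)"

definition is_plaq :: "plaq \<Rightarrow> bool" where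
  "is_plaq p = (case p of (x, j, k) \<Rightarrow> x \<in> lat \<and> j < 4 \<and> k < 4 \<and> j \<noteq> k)"

definition bd :: "plaq \<Rightarrow> edge list" where
  "bd p = (case p of (x, j, k) \<Rightarrow>
      [(x, step x j), (step x j, step (step x j) k),
       (step (step x j) k, step x k), (step x k, x)])"

definition plaqs :: "nat \<Rightarrow> plaq set" where
  "plaqs N = {p. is_plaq p \<and> set (bd p) \<subseteq> edges N}"

definition cobd :: "edge \<Rightarrow> plaq set" where
  "cobd e = {p. is_plaq p \<and> e \<in> set (bd p)}"

(* G = Z_n, elements represented by 0..n-1; configurations on E_N (zero off E_N) *)
definition configs :: "nat \<Rightarrow> int \<Rightarrow> (edge \<Rightarrow> int) set" where
  "configs N n = {\<sigma>. (\<forall>e \<in> edges N. \<sigma> e \<in> {0..<n}) \<and> (\<forall>e. e \<notin> edges N \<longrightarrow> \<sigma> e = 0)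
                    \<and> (\<forall>e \<in> edges N. \<sigma> (rev_edge e) = (- \<sigma> e) mod n)}"

definition dcurl :: "int \<Rightarrow> (edge \<Rightarrow> int) \<Rightarrow> plaq \<Rightarrow> int" where
  "dcurl n \<sigma> p = (\<Sum>e\<leftarrow>bd p. \<sigma> e) mod n"

definition configs0 :: "nat \<Rightarrow> int \<Rightarrow> (edge \<Rightarrow> int) set" where
  "configs0 N n = {\<sigma> \<in> configs N n. \<forall>p \<in> plaqs N. dcurl n \<sigma> p = 0}"

(* The sums over oriented plaquettes/edges of \<rho> are real (both orientations occur);
   we take Re explicitly. *)
definition weight :: "nat \<Rightarrow> int \<Rightarrow> (int \<Rightarrow> complex) \<Rightarrow> real \<Rightarrow> real \<Rightarrow> (edge \<Rightarrow> int) \<Rightarrow> real" where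
  "weight N n \<rho> \<beta> \<kappa> \<sigma> = exp (\<beta> * Re (\<Sum>p \<in> plaqs N. \<rho> (dcurl n \<sigma> p))
                                + \<kappa> * Re (\<Sum>e \<in> edges N. \<rho> (\<sigma> e)))"

definition weight_inf :: "nat \<Rightarrow> (int \<Rightarrow> complex) \<Rightarrow> real \<Rightarrow> (edge \<Rightarrow> int) \<Rightarrow> real" where
  "weight_inf N \<rho> \<kappa> \<sigma> = exp (\<kappa> * Re (\<Sum>e \<in> edges N. \<rho> (\<sigma> e)))"

definition mu :: "nat \<Rightarrow> int \<Rightarrow> (int \<Rightarrow> complex) \<Rightarrow> real \<Rightarrow> real \<Rightarrow> (edge \<Rightarrow> int) \<Rightarrow> real" where
  "mu N n \<rho> \<beta> \<kappa> \<sigma> = (if \<sigma> \<in> configs N n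
      then weight N n \<rho> \<beta> \<kappa> \<sigma> / (\<Sum>\<tau> \<in> configs N n. weight N n \<rho> \<beta> \<kappa> \<tau>) else 0)"

definition mu_inf :: "nat \<Rightarrow> int \<Rightarrow> (int \<Rightarrow> complex) \<Rightarrow> real \<Rightarrow> (edge \<Rightarrow> int) \<Rightarrow> real" where
  "mu_inf N n \<rho> \<kappa> \<sigma> = (if \<sigma> \<in> configs0 N n
      then weight_inf N \<rho> \<kappa> \<sigma> / (\<Sum>\<tau> \<in> configs0 N n. weight_inf N \<rho> \<kappa> \<tau>) else 0)"

definition supp :: "(edge \<Rightarrow> int) \<Rightarrow> edge set" where
  "supp \<sigma> = {e. \<sigma> e \<noteq> 0}"

definition cgraph :: "nat \<Rightarrow> (edge \<Rightarrow> int) \<Rightarrow> (edge \<Rightarrow> int) \<Rightarrow> (edge \<times> edge) set" where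
  "cgraph N \<sigma> \<sigma>' = {(e, e'). e \<in> edges N \<and> e' \<in> edges N \<and> e \<noteq> e' \<and>
      (e' = rev_edge e \<or>
       (e \<in> supp \<sigma> \<union> supp \<sigma>' \<and> e' \<in> supp \<sigma> \<union> supp \<sigma>' \<and>
        (cobd e \<inter> cobd e' \<noteq> {} \<or> cobd e \<inter> cobd (rev_edge e') \<noteq> {})))}"

definition comps_meeting :: "nat \<Rightarrow> (edge \<times> edge) set \<Rightarrow> edge set \<Rightarrow> edge set" where
  "comps_meeting N R A = {e \<in> edges N. \<exists>a \<in> A \<inter> edges N. (a, e) \<in> R\<^sup>*}"

definition Ecoup :: "nat \<Rightarrow> int \<Rightarrow> (edge \<Rightarrow> int) \<Rightarrow> (edge \<Rightarrow> int) \<Rightarrow> edge set" where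
  "Ecoup N n \<sigma> \<sigma>' = comps_meeting N (cgraph N \<sigma> \<sigma>')
      (supp \<sigma> \<inter> (\<Union>p \<in> {p \<in> plaqs N. dcurl n \<sigma> p \<noteq> 0}. set (bd p)))"

definition restr :: "(edge \<Rightarrow> int) \<Rightarrow> edge set \<Rightarrow> edge \<Rightarrow> int" where
  "restr f S e = (if e \<in> S then f e else 0)"

(* \<sigma>' = \<hat>\<sigma>'|_E + \<hat>\<sigma>|_{E_N \ E}, addition in Z_n *)
definition couple :: "nat \<Rightarrow> int \<Rightarrow> (edge \<Rightarrow> int) \<Rightarrow> (edge \<Rightarrow> int) \<Rightarrow> (edge \<Rightarrow> int)" where
  "couple N n s s' = (let E = Ecoup N n s s' in
      (\<lambda>e. (restr s' E e + restr s (edges N - E) e) mod n))"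

end

theory Submission imports Defs begin

lemma finite_box: "finite (box N)"
proof -
  have "box N \<subseteq> {f. \<forall>x. (x \<in> {..<4::nat} \<longrightarrow> f x \<in> {-int N..int N}) \<and> (x \<notin> {..<4} \<longrightarrow> f x = 0)}"
    by (auto simp: box_def lat_def)
  then show ?thesis by (rule finite_subset) (rule finite_set_of_finite_funs, auto)
qed

lemma finite_edges: "finite (edges N)"
proof -
  have "edges N \<subseteq> box N \<times> box N" by (auto simp: edges_def)
  then show ?thesis using finite_box by (metis finite_SigmaI finite_subset)
qed

lemma finite_configs: "finite (configs N n)"
proof -
  have "configs N n \<subseteq> {f. \<forall>x. (x \<in> edges N \<longrightarrow> f x \<in> {0..<n}) \<and> (x \<notin> edges N \<longrightarrow> f x = 0)}"
    by (auto simp: configs_def)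
  then show ?thesis by (rule finite_subset) (rule finite_set_of_finite_funs, auto simp: finite_edges)
qed

lemma finite_configs0: "finite (configs0 N n)"
  using finite_configs[of N n] unfolding configs0_def by auto

lemma zero_configs0: "0 < n \<Longrightarrow> (\<lambda>_. 0) \<in> configs0 N n" "0 < n \<Longrightarrow> (\<lambda>_. 0) \<in> configs N n"
  by (auto simp: configs0_def configs_def dcurl_def)

lemma rev_edges: "e \<in> edges N \<Longrightarrow> rev_edge e \<in> edges N"
  by (auto simp: edges_def rev_edge_def)

lemma rev_rev[simp]: "rev_edge (rev_edge e) = e"
  by (simp add: rev_edge_def)

lemma rev_neq: "e \<in> edges N \<Longrightarrow> rev_edge e \<noteq> e"
  by (auto simp: edges_def rev_edge_def step_def fun_eq_iff) (metis add_cancel_left_right zero_neq_one)+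


lemma sl0: "\<forall>x\<in>set xs. f x = (0::int) \<Longrightarrow> sum_list (map f xs) = 0"
  by (induct xs) auto

lemma E_sub: "Ecoup N n s s' \<subseteq> edges N"
  by (auto simp: Ecoup_def comps_meeting_def)

lemma E_reach: "e \<in> Ecoup N n s s' \<Longrightarrow> (e, e') \<in> cgraph N s s' \<Longrightarrow> e' \<in> Ecoup N n s s'"
proof -
  assume a: "e \<in> Ecoup N n s s'" and b: "(e, e') \<in> cgraph N s s'"
  have "e' \<in> edges N" using b by (simp add: cgraph_def)
  moreover obtain x where "x \<in> (supp s \<inter> (\<Union>p \<in> {p \<in> plaqs N. dcurl n s p \<noteq> 0}. set (bd p))) \<inter> edges N"
     "(x, e) \<in> (cgraph N s s')\<^sup>*"
    using a unfolding Ecoup_def comps_meeting_def by blast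
  ultimately show ?thesis unfolding Ecoup_def comps_meeting_def
    using b by (blast intro: rtrancl.rtrancl_into_rtrancl)
qed

lemma E_rev: "e \<in> Ecoup N n s s' \<Longrightarrow> rev_edge e \<in> Ecoup N n s s'"
proof -
  assume a: "e \<in> Ecoup N n s s'"
  then have e: "e \<in> edges N" using E_sub by blast
  have "(e, rev_edge e) \<in> cgraph N s s'"
    unfolding cgraph_def using e rev_edges[OF e] rev_neq[OF e] by auto
  then show ?thesis using a E_reach by blast
qed

lemma E_rev_iff: "rev_edge e \<in> Ecoup N n s s' \<longleftrightarrow> e \<in> Ecoup N n s s'"
  using E_rev by (metis rev_rev)

lemma E_plaq:
  assumes "p \<in> plaqs N" "e \<in> set (bd p)" "e' \<in> set (bd p)"
    "e \<in> supp s \<union> supp s'" "e' \<in> supp s \<union> supp s'" "e \<in> Ecoup N n s s'"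
  shows "e' \<in> Ecoup N n s s'"
proof (cases "e = e'")
  case False
  have "(e, e') \<in> cgraph N s s'"
    using assms False unfolding cgraph_def plaqs_def cobd_def by auto
  then show ?thesis using assms(6) E_reach by blast
qed (use assms in auto)

lemma E_defect:
  assumes "p \<in> plaqs N" "dcurl n s p \<noteq> 0"
  shows "\<exists>e0 \<in> set (bd p). s e0 \<noteq> 0 \<and> e0 \<in> Ecoup N n s s'"
proof (rule ccontr)
  assume H: "\<not> ?thesis"
  show False
  proof (cases "\<exists>e0 \<in> set (bd p). s e0 \<noteq> 0")
    case True
    then obtain e0 where e0: "e0 \<in> set (bd p)" "s e0 \<noteq> 0" by blast
    have ed: "e0 \<in> edges N" using e0 assms(1) by (auto simp: plaqs_def)
    have "e0 \<in> Ecoup N n s s'"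
      unfolding Ecoup_def comps_meeting_def using e0 ed assms by (auto simp: supp_def)
    then show False using H e0 by blast
  next
    case False
    then have "(\<Sum>e\<leftarrow>bd p. s e) = 0" using False sl0[of "bd p" s] by blast
    then show False using assms(2) by (simp add: dcurl_def)
  qed
qed


definition sw :: "edge set \<Rightarrow> (edge \<Rightarrow> int) \<Rightarrow> (edge \<Rightarrow> int) \<Rightarrow> edge \<Rightarrow> int" where
  "sw E x y e = (if e \<in> E then y e else x e)"

lemma conf_range: "s \<in> configs N n \<Longrightarrow> e \<in> edges N \<Longrightarrow> s e mod n = s e"
  by (auto simp: configs_def)

lemma conf_zero: "s \<in> configs N n \<Longrightarrow> e \<notin> edges N \<Longrightarrow> s e = 0"
  unfolding configs_def by blast

lemma couple_eq:
  assumes "s \<in> configs N n" "s' \<in> configs N n"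
  shows "couple N n s s' = sw (Ecoup N n s s') s s'"
proof
  fix e
  show "couple N n s s' e = sw (Ecoup N n s s') s s' e"
    using E_sub[of N n s s'] conf_range[OF assms(1), of e] conf_range[OF assms(2), of e]
      conf_zero[OF assms(1), of e]
    by (auto simp: couple_def sw_def restr_def Let_def)
qed

lemma dcurl_cong: "(\<And>e. e \<in> set (bd p) \<Longrightarrow> f e = g e) \<Longrightarrow> dcurl n f p = dcurl n g p"
  unfolding dcurl_def by (metis map_eq_conv)

context
  fixes N :: nat and n :: int and s s' :: "edge \<Rightarrow> int"
  assumes npos: "0 < n" and sc: "s \<in> configs N n" and sc': "s' \<in> configs0 N n"
begin

abbreviation "EE \<equiv> Ecoup N n s s'"

lemma sc'c: "s' \<in> configs N n" using sc' by (simp add: configs0_def)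

lemma plaq_cases:
  assumes p: "p \<in> plaqs N"
  shows "(\<forall>e \<in> set (bd p). e \<notin> EE \<longrightarrow> s e = 0 \<and> s' e = 0) \<or>
         ((\<forall>e \<in> set (bd p). e \<in> EE \<longrightarrow> s e = 0 \<and> s' e = 0) \<and> dcurl n s p = 0)"
proof (cases "\<exists>e\<in>set (bd p). (s e \<noteq> 0 \<or> s' e \<noteq> 0) \<and> e \<in> EE")
  case True
  then obtain e where e: "e\<in>set (bd p)" "s e \<noteq> 0 \<or> s' e \<noteq> 0" "e \<in> EE" by blast
  have "\<forall>e' \<in> set (bd p). e' \<notin> EE \<longrightarrow> s e' = 0 \<and> s' e' = 0"
    using E_plaq[OF p e(1) _ _ _ e(3)] e(2) by (auto simp: supp_def)
  then show ?thesis by blast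
next
  case False
  then have "dcurl n s p = 0" using E_defect[OF p, of n s s'] by blast
  then show ?thesis using False by blast
qed

lemma defect_in:
  assumes p: "p \<in> plaqs N" and d: "dcurl n s p \<noteq> 0"
  shows "\<forall>e \<in> set (bd p). e \<notin> EE \<longrightarrow> s e = 0 \<and> s' e = 0"
  using plaq_cases[OF p] d E_defect[OF p d, of s'] by blast

definition "bb = sw EE s' s"
definition "aa = sw EE s s'"

lemma dcurl_bb: "p \<in> plaqs N \<Longrightarrow> dcurl n bb p = dcurl n s p"
proof -
  assume p: "p \<in> plaqs N"
  from plaq_cases[OF p] show ?thesis
  proof
    assume "\<forall>e \<in> set (bd p). e \<notin> EE \<longrightarrow> s e = 0 \<and> s' e = 0"
    then show ?thesis by (intro dcurl_cong) (auto simp: bb_def sw_def)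
  next
    assume H: "(\<forall>e \<in> set (bd p). e \<in> EE \<longrightarrow> s e = 0 \<and> s' e = 0) \<and> dcurl n s p = 0"
    then have "dcurl n bb p = dcurl n s' p" by (intro dcurl_cong) (auto simp: bb_def sw_def)
    also have "\<dots> = 0" using sc' p by (simp add: configs0_def)
    finally show ?thesis using H by simp
  qed
qed

lemma dcurl_aa: "p \<in> plaqs N \<Longrightarrow> dcurl n aa p = 0"
proof -
  assume p: "p \<in> plaqs N"
  from plaq_cases[OF p] show ?thesis
  proof
    assume "\<forall>e \<in> set (bd p). e \<notin> EE \<longrightarrow> s e = 0 \<and> s' e = 0"
    then have "dcurl n aa p = dcurl n s' p" by (intro dcurl_cong) (auto simp: aa_def sw_def)
    also have "\<dots> = 0" using sc' p by (simp add: configs0_def)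
    finally show ?thesis .
  next
    assume H: "(\<forall>e \<in> set (bd p). e \<in> EE \<longrightarrow> s e = 0 \<and> s' e = 0) \<and> dcurl n s p = 0"
    then have "dcurl n aa p = dcurl n s p" by (intro dcurl_cong) (auto simp: aa_def sw_def)
    then show ?thesis using H by simp
  qed
qed

lemma sw_conf:
  assumes x: "x \<in> configs N n" and y: "y \<in> configs N n"
  shows "sw EE x y \<in> configs N n"
proof -
  have "\<forall>e \<in> edges N. sw EE x y (rev_edge e) = (- sw EE x y e) mod n"
  proof
    fix e assume e: "e \<in> edges N"
    show "sw EE x y (rev_edge e) = (- sw EE x y e) mod n"
      using x y e E_rev_iff[of e N n s s'] unfolding configs_def sw_def by auto
  qed
  then show ?thesis using x y E_sub[of N n s s'] unfolding configs_def sw_def by auto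
qed

lemma bb_conf: "bb \<in> configs N n"
  unfolding bb_def using sw_conf[OF sc'c sc] .

lemma aa_conf0: "aa \<in> configs0 N n"
  unfolding aa_def configs0_def using sw_conf[OF sc sc'c] dcurl_aa[unfolded aa_def] by auto

lemma supp_union: "supp bb \<union> supp aa = supp s \<union> supp s'"
  by (auto simp: supp_def bb_def aa_def sw_def)

lemma E_swap: "Ecoup N n bb aa = EE"
proof -
  have g: "cgraph N bb aa = cgraph N s s'"
    unfolding cgraph_def supp_union ..
  have D: "{p \<in> plaqs N. dcurl n bb p \<noteq> 0} = {p \<in> plaqs N. dcurl n s p \<noteq> 0}"
    using dcurl_bb by auto
  have "supp bb \<inter> (\<Union>p \<in> {p \<in> plaqs N. dcurl n s p \<noteq> 0}. set (bd p))
      = supp s \<inter> (\<Union>p \<in> {p \<in> plaqs N. dcurl n s p \<noteq> 0}. set (bd p))"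
  proof -
    have "bb e = s e" if "e \<in> set (bd p)" "p \<in> plaqs N" "dcurl n s p \<noteq> 0" for e p
      using defect_in[OF that(2,3)] that(1) by (auto simp: bb_def sw_def)
    then show ?thesis by (auto simp: supp_def)
  qed
  then show ?thesis unfolding Ecoup_def g D by simp
qed

lemma swap_back: "sw EE aa bb = s" "sw EE bb aa = s'"
  by (auto simp: fun_eq_iff sw_def aa_def bb_def)

lemma weight_swap:
  "weight N n \<rho> \<beta> \<kappa> bb * weight_inf N \<rho> \<kappa> aa = weight N n \<rho> \<beta> \<kappa> s * weight_inf N \<rho> \<kappa> s'"
proof -
  have P: "(\<Sum>p \<in> plaqs N. \<rho> (dcurl n bb p)) = (\<Sum>p \<in> plaqs N. \<rho> (dcurl n s p))"
    using dcurl_bb by (intro sum.cong) auto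
  have "(\<Sum>e \<in> edges N. \<rho> (bb e)) + (\<Sum>e \<in> edges N. \<rho> (aa e))
      = (\<Sum>e \<in> edges N. \<rho> (bb e) + \<rho> (aa e))" by (simp add: sum.distrib)
  also have "\<dots> = (\<Sum>e \<in> edges N. \<rho> (s e) + \<rho> (s' e))"
    by (intro sum.cong) (auto simp: aa_def bb_def sw_def)
  also have "\<dots> = (\<Sum>e \<in> edges N. \<rho> (s e)) + (\<Sum>e \<in> edges N. \<rho> (s' e))" by (simp add: sum.distrib)
  finally have Ed: "Re (\<Sum>e \<in> edges N. \<rho> (bb e)) + Re (\<Sum>e \<in> edges N. \<rho> (aa e))
      = Re (\<Sum>e \<in> edges N. \<rho> (s e)) + Re (\<Sum>e \<in> edges N. \<rho> (s' e))"
    by (metis plus_complex.sel(1))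
  show ?thesis unfolding weight_def weight_inf_def exp_add[symmetric] P
    using Ed by (simp add: algebra_simps) (metis distrib_left)
qed

end


lemma mu_sum1: "0 < n \<Longrightarrow> (\<Sum>s \<in> configs N n. mu N n \<rho> \<beta> \<kappa> s) = 1"
proof -
  assume n: "0 < n"
  let ?Z = "\<Sum>\<tau> \<in> configs N n. weight N n \<rho> \<beta> \<kappa> \<tau>"
  have "?Z > 0" using zero_configs0(2)[OF n, of N] finite_configs
    by (intro sum_pos) (auto simp: weight_def)
  moreover have "(\<Sum>s \<in> configs N n. mu N n \<rho> \<beta> \<kappa> s) = (\<Sum>s \<in> configs N n. weight N n \<rho> \<beta> \<kappa> s / ?Z)"
    by (rule sum.cong) (auto simp: mu_def)
  moreover have "\<dots> = ?Z / ?Z" by (rule sum_divide_distrib[symmetric])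
  ultimately show ?thesis by simp
qed

lemma muinf_sum1: "0 < n \<Longrightarrow> (\<Sum>s \<in> configs0 N n. mu_inf N n \<rho> \<kappa> s) = 1"
proof -
  assume n: "0 < n"
  let ?Z = "\<Sum>\<tau> \<in> configs0 N n. weight_inf N \<rho> \<kappa> \<tau>"
  have "?Z > 0" using zero_configs0(1)[OF n, of N] finite_configs0
    by (intro sum_pos) (auto simp: weight_inf_def)
  moreover have "(\<Sum>s \<in> configs0 N n. mu_inf N n \<rho> \<kappa> s) = (\<Sum>s \<in> configs0 N n. weight_inf N \<rho> \<kappa> s / ?Z)"
    by (rule sum.cong) (auto simp: mu_inf_def)
  moreover have "\<dots> = ?Z / ?Z" by (rule sum_divide_distrib[symmetric])
  ultimately show ?thesis by simp
qed

lemma sdelta: "finite S \<Longrightarrow> (\<Sum>s\<in>S. (f s::real) * (if s = t then 1 else 0)) = (if t \<in> S then f t else 0)"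
proof -
  assume "finite S"
  have "(\<Sum>s\<in>S. (f s::real) * (if s = t then 1 else 0)) = (\<Sum>s\<in>S. if s = t then f s else 0)"
    by (rule sum.cong) auto
  then show ?thesis using \<open>finite S\<close> by (simp add: sum.delta')
qed

definition Psi :: "nat \<Rightarrow> int \<Rightarrow> (edge \<Rightarrow> int) \<times> (edge \<Rightarrow> int) \<Rightarrow> (edge \<Rightarrow> int) \<times> (edge \<Rightarrow> int)" where
  "Psi N n z = (bb N n (fst z) (snd z), aa N n (fst z) (snd z))"

lemma Psi_props:
  assumes n: "0 < n" and z: "z \<in> configs N n \<times> configs0 N n"
  shows "Psi N n z \<in> configs N n \<times> configs0 N n" "Psi N n (Psi N n z) = z"
    "mu N n \<rho> \<beta> \<kappa> (fst (Psi N n z)) * mu_inf N n \<rho> \<kappa> (snd (Psi N n z))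
       = mu N n \<rho> \<beta> \<kappa> (fst z) * mu_inf N n \<rho> \<kappa> (snd z)"
    "snd (Psi N n z) = couple N n (fst z) (snd z)"
proof -
  obtain s s' where zz: "z = (s, s')" by (cases z)
  have sc: "s \<in> configs N n" and sc': "s' \<in> configs0 N n" using z zz by auto
  note ctx = n sc sc'
  show "Psi N n z \<in> configs N n \<times> configs0 N n"
    using bb_conf[OF ctx] aa_conf0[OF ctx] zz by (simp add: Psi_def)
  have bc: "bb N n s s' \<in> configs N n" and ac: "aa N n s s' \<in> configs0 N n"
    using bb_conf[OF ctx] aa_conf0[OF ctx] .
  show "Psi N n (Psi N n z) = z"
    using E_swap[OF ctx] swap_back[OF ctx] zz bb_def[OF n bc ac] aa_def[OF n bc ac]
    by (simp add: Psi_def)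
  show "mu N n \<rho> \<beta> \<kappa> (fst (Psi N n z)) * mu_inf N n \<rho> \<kappa> (snd (Psi N n z))
       = mu N n \<rho> \<beta> \<kappa> (fst z) * mu_inf N n \<rho> \<kappa> (snd z)"
    using bc ac sc sc' weight_swap[OF ctx, of \<rho> \<beta> \<kappa>] zz
    by (simp add: Psi_def mu_def mu_inf_def)
  show "snd (Psi N n z) = couple N n (fst z) (snd z)"
    using couple_eq[OF sc sc'c[OF ctx]] zz aa_def[OF ctx] by (simp add: Psi_def)
qed

theorem mainTheorem14:
  fixes N :: nat and n :: int and \<rho> :: "int \<Rightarrow> complex" and \<beta> \<kappa> :: real
  assumes "0 < n"
    and "\<forall>a b. \<rho> (a + b) = \<rho> a * \<rho> b"
    and "\<forall>a. cmod (\<rho> a) = 1"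
    and "\<forall>a. \<rho> a = 1 \<longleftrightarrow> n dvd a"
    and "\<beta> \<ge> 0" and "\<kappa> \<ge> 0"
  shows "(\<forall>\<tau>. (\<Sum>s \<in> configs N n. \<Sum>s' \<in> configs0 N n.
              mu N n \<rho> \<beta> \<kappa> s * mu_inf N n \<rho> \<kappa> s' * (if couple N n s s' = \<tau> then 1 else 0))
            = mu_inf N n \<rho> \<kappa> \<tau>)
       \<and> (\<forall>\<tau>. (\<Sum>s \<in> configs N n. \<Sum>s' \<in> configs0 N n.
              mu N n \<rho> \<beta> \<kappa> s * mu_inf N n \<rho> \<kappa> s' * (if s = \<tau> then 1 else 0))
            = mu N n \<rho> \<beta> \<kappa> \<tau>)"
proof (intro conjI allI)
  fix \<tau>
  let ?A = "configs N n \<times> configs0 N n"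
  let ?m = "mu N n \<rho> \<beta> \<kappa>" and ?mi = "mu_inf N n \<rho> \<kappa>"
  have mi0: "\<tau> \<notin> configs0 N n \<Longrightarrow> ?mi \<tau> = 0" by (simp add: mu_inf_def)
  have m0: "\<tau> \<notin> configs N n \<Longrightarrow> ?m \<tau> = 0" by (simp add: mu_def)
  have "(\<Sum>s \<in> configs N n. \<Sum>s' \<in> configs0 N n. ?m s * ?mi s' * (if couple N n s s' = \<tau> then 1 else 0))
      = (\<Sum>z \<in> ?A. ?m (fst z) * ?mi (snd z) * (if couple N n (fst z) (snd z) = \<tau> then 1 else 0))"
    by (simp add: sum.cartesian_product case_prod_beta)
  also have "\<dots> = (\<Sum>z \<in> ?A. ?m (fst z) * ?mi (snd z) * (if snd z = \<tau> then 1 else 0))"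
    using Psi_props[OF assms(1)]
    by (intro sum.reindex_bij_witness[where i = "Psi N n" and j = "Psi N n"]) auto
  also have "\<dots> = (\<Sum>s \<in> configs N n. \<Sum>s' \<in> configs0 N n. ?m s * (?mi s' * (if s' = \<tau> then 1 else 0)))"
    by (simp add: sum.cartesian_product case_prod_beta mult.assoc)
  also have "\<dots> = (\<Sum>s \<in> configs N n. ?m s) * (\<Sum>s' \<in> configs0 N n. ?mi s' * (if s' = \<tau> then 1 else 0))"
    by (simp add: sum_product)
  also have "\<dots> = ?mi \<tau>"
    using mu_sum1[OF assms(1)] sdelta[OF finite_configs0] mi0 by auto
  finally show "(\<Sum>s \<in> configs N n. \<Sum>s' \<in> configs0 N n. ?m s * ?mi s' * (if couple N n s s' = \<tau> then 1 else 0)) = ?mi \<tau>" .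
  have "(\<Sum>s \<in> configs N n. \<Sum>s' \<in> configs0 N n. ?m s * ?mi s' * (if s = \<tau> then 1 else 0))
      = (\<Sum>s \<in> configs N n. (?m s * (if s = \<tau> then 1 else 0)) * (\<Sum>s' \<in> configs0 N n. ?mi s'))"
    by (simp add: sum_distrib_left sum_distrib_right mult_ac)
  also have "\<dots> = ?m \<tau>"
    using muinf_sum1[OF assms(1)] sdelta[OF finite_configs] m0 by (auto simp: sum_distrib_right[symmetric])
  finally show "(\<Sum>s \<in> configs N n. \<Sum>s' \<in> configs0 N n. ?m s * ?mi s' * (if s = \<tau> then 1 else 0)) = ?m \<tau>" .
qed

end
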